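(* For all $\alpha,\beta\in\mathbb{R}$, let $\mathfrak{g}=\mathfrak{g}(\alpha,\beta)$ with center $\mathfrak{z}$, and let $\ell=e_{11}^*\in\mathfrak{g}^*$ be the linear form with $\ell(e_{11})=1$ and $\ell(e_i)=0$ for $i\le 10$. Then $\mathfrak{g}(\ell)=\mathfrak{z}$.
   Context: For $\alpha,\beta\in\mathbb{R}$, $\mathfrak{g}(\alpha,\beta)$ is the $11$-dimensional real Lie algebra with basis $e_1,\dots,e_{11}$ whose nonzero brackets (up to skew-symmetry) are: $[e_1,e_i]=e_{i+1}$ for $2\le i\le 10$; $[e_2,e_3]=e_5+\alpha e_6$, $[e_2,e_4]=e_6+\alpha e_7$, $[e_2,e_5]=-e_7+(\alpha-\beta)e_8$, $[e_2,e_6]=-3e_8+(\alpha-2\beta)e_9$, $[e_2,e_7]=-2e_9-\tfrac14(5\alpha+7\beta)e_{10}+\tfrac1{16}(27\alpha^2+12\alpha\beta+\beta^2)e_{11}$, $[e_2,e_8]=2e_{10}-\tfrac14(23\alpha+\beta)e_{11}$, $[e_2,e_9]=-e_{11}$; $[e_3,e_4]=2e_7+\beta e_8$, $[e_3,e_5]=2e_8+\beta e_9$, $[e_3,e_6]=-e_9+\tfrac14(9\alpha-\beta)e_{10}-\tfrac1{16}(27\alpha^2+12\alpha\beta+\beta^2)e_{11}$, $[e_3,e_7]=-4e_{10}+\tfrac32(3\alpha-\beta)e_{11}$, $[e_3,e_8]=3e_{11}$; $[e_4,e_5]=3e_9-\tfrac14(9\alpha-5\beta)e_{10}+\tfrac1{16}(27\alpha^2+12\alpha\beta+\beta^2)e_{11}$,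 $[e_4,e_6]=3e_{10}-\tfrac14(9\alpha-5\beta)e_{11}$, $[e_4,e_7]=-7e_{11}$; $[e_5,e_6]=10e_{11}$; all other brackets $[e_i,e_j]$ with $i<j$ are zero. Its center is $\mathfrak{z}=\mathrm{span}\{e_{11}\}$. For $\ell\in\mathfrak{g}^*$, $\mathfrak{g}(\ell)=\{y\in\mathfrak{g}:\ell([x,y])=0 \text{ for all } x\in\mathfrak{g}\}$. *)

theory Defs
  imports Complex_Main
begin

text \<open>Elements of the 11-dimensional Lie algebra g(alpha,beta) are represented as
coordinate functions x :: nat => real, where x k is the coefficient of e_k (1 <= k <= 11),
and x k = 0 for k outside 1..11.\<close>

definition gvec :: "(nat \<Rightarrow> real) set" where
  "gvec = {x. \<forall>k. k \<notin> {1..11} \<longrightarrow> x k = 0}"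

definition ebas :: "nat \<Rightarrow> nat \<Rightarrow> real" where
  "ebas a = (\<lambda>k. if k = a then 1 else 0)"

definition v2 :: "nat \<Rightarrow> real \<Rightarrow> nat \<Rightarrow> real \<Rightarrow> nat \<Rightarrow> real" where
  "v2 a p b q = (\<lambda>k. (if k = a then p else 0) + (if k = b then q else 0))"

definition v3 :: "nat \<Rightarrow> real \<Rightarrow> nat \<Rightarrow> real \<Rightarrow> nat \<Rightarrow> real \<Rightarrow> nat \<Rightarrow> real" where
  "v3 a p b q c r = (\<lambda>k. (if k = a then p else 0) + (if k = b then q else 0) + (if k = c then r else 0))"

definition ub :: "real \<Rightarrow> real \<Rightarrow> nat \<Rightarrow> nat \<Rightarrow> nat \<Rightarrow> real" where
  "ub \<alpha> \<beta> i j =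
    (if i = 1 \<and> 2 \<le> j \<and> j \<le> 10 then ebas (j + 1)
     else if (i, j) = (2, 3) then v2 5 1 6 \<alpha>
     else if (i, j) = (2, 4) then v2 6 1 7 \<alpha>
     else if (i, j) = (2, 5) then v2 7 (-1) 8 (\<alpha> - \<beta>)
     else if (i, j) = (2, 6) then v2 8 (-3) 9 (\<alpha> - 2 * \<beta>)
     else if (i, j) = (2, 7) then v3 9 (-2) 10 (-(1/4) * (5 * \<alpha> + 7 * \<beta>))
                                     11 ((1/16) * (27 * \<alpha>^2 + 12 * \<alpha> * \<beta> + \<beta>^2))
     else if (i, j) = (2, 8) then v2 10 2 11 (-(1/4) * (23 * \<alpha> + \<beta>))
     else if (i, j) = (2, 9) then (\<lambda>k. - ebas 11 k)
     else if (i, j) = (3, 4) then v2 7 2 8 \<beta>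
     else if (i, j) = (3, 5) then v2 8 2 9 \<beta>
     else if (i, j) = (3, 6) then v3 9 (-1) 10 ((1/4) * (9 * \<alpha> - \<beta>))
                                     11 (-(1/16) * (27 * \<alpha>^2 + 12 * \<alpha> * \<beta> + \<beta>^2))
     else if (i, j) = (3, 7) then v2 10 (-4) 11 ((3/2) * (3 * \<alpha> - \<beta>))
     else if (i, j) = (3, 8) then (\<lambda>k. 3 * ebas 11 k)
     else if (i, j) = (4, 5) then v3 9 3 10 (-(1/4) * (9 * \<alpha> - 5 * \<beta>))
                                     11 ((1/16) * (27 * \<alpha>^2 + 12 * \<alpha> * \<beta> + \<beta>^2))
     else if (i, j) = (4, 6) then v2 10 3 11 (-(1/4) * (9 * \<alpha> - 5 * \<beta>))
     else if (i, j) = (4, 7) then (\<lambda>k. -7 * ebas 11 k)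
     else if (i, j) = (5, 6) then (\<lambda>k. 10 * ebas 11 k)
     else (\<lambda>k. 0))"

definition bas :: "real \<Rightarrow> real \<Rightarrow> nat \<Rightarrow> nat \<Rightarrow> nat \<Rightarrow> real" where
  "bas \<alpha> \<beta> i j =
    (if i < j then ub \<alpha> \<beta> i j else if j < i then (\<lambda>k. - ub \<alpha> \<beta> j i k) else (\<lambda>k. 0))"

definition gbr :: "real \<Rightarrow> real \<Rightarrow> (nat \<Rightarrow> real) \<Rightarrow> (nat \<Rightarrow> real) \<Rightarrow> nat \<Rightarrow> real" where
  "gbr \<alpha> \<beta> x y = (\<lambda>k. \<Sum>i\<in>{1..11}. \<Sum>j\<in>{1..11}. x i * y j * bas \<alpha> \<beta> i j k)"

definition stab :: "real \<Rightarrow> real \<Rightarrow> ((nat \<Rightarrow> real) \<Rightarrow> real) \<Rightarrow> (nat \<Rightarrow> real) set" where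
  "stab \<alpha> \<beta> l = {y \<in> gvec. \<forall>x \<in> gvec. l (gbr \<alpha> \<beta> x y) = 0}"

definition zcen :: "(nat \<Rightarrow> real) set" where
  "zcen = {y. \<exists>c. y = (\<lambda>k. c * ebas 11 k)}"

definition ell :: "(nat \<Rightarrow> real) \<Rightarrow> real" where
  "ell x = x 11"

end

theory Submission imports Defs begin
lemma s11: "(\<Sum>i\<in>{1..11::nat}. f i) = f 1 + f 2 + f 3 + f 4 + f 5 + f 6 + f 7 + f 8 + f 9 + f 10 + (f 11::real)"
proof -
  have "{1..11::nat} = {1,2,3,4,5,6,7,8,9,10,11}" by (auto; arith)
  then show ?thesis by simp
qed
lemma key: "gbr a b x y 11 = 
  x 1 * y 10 - x 10 * y 1
  + (1/16) * (27 * a^2 + 12 * a * b + b^2) * (x 2 * y 7 - x 7 * y 2)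
  + (-(1/4) * (23 * a + b)) * (x 2 * y 8 - x 8 * y 2)
  - (x 2 * y 9 - x 9 * y 2)
  - (1/16) * (27 * a^2 + 12 * a * b + b^2) * (x 3 * y 6 - x 6 * y 3)
  + (3/2) * (3 * a - b) * (x 3 * y 7 - x 7 * y 3)
  + 3 * (x 3 * y 8 - x 8 * y 3)
  + (1/16) * (27 * a^2 + 12 * a * b + b^2) * (x 4 * y 5 - x 5 * y 4)
  + (-(1/4) * (9 * a - 5 * b)) * (x 4 * y 6 - x 6 * y 4)
  - 7 * (x 4 * y 7 - x 7 * y 4)
  + 10 * (x 5 * y 6 - x 6 * y 5)"
  unfolding gbr_def s11 by (simp add: bas_def ub_def ebas_def v2_def v3_def algebra_simps)

theorem proposition4p3:
  fixes \<alpha> \<beta> :: real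
  shows "stab \<alpha> \<beta> ell = zcen"
proof
  show "stab \<alpha> \<beta> ell \<subseteq> zcen"
  proof
    fix y assume y: "y \<in> stab \<alpha> \<beta> ell"
    have g: "y \<in> gvec" using y by (simp add: stab_def)
    have e: "gbr \<alpha> \<beta> (ebas i) y 11 = 0" if "i \<in> {1..10}" for i
      using y that unfolding stab_def ell_def gvec_def ebas_def by auto
    have e1: "y 10 = 0" using e[of 1] by (simp add: key ebas_def)
    have e10: "y 1 = 0" using e[of 10] by (simp add: key ebas_def)
    have e9: "y 2 = 0" using e[of 9] by (simp add: key ebas_def)
    have e8: "y 3 = 0" using e[of 8] e9 by (simp add: key ebas_def)
    have e7: "y 4 = 0" using e[of 7] e9 e8 by (simp add: key ebas_def)
    have e6: "y 5 = 0" using e[of 6] e9 e8 e7 by (simp add: key ebas_def)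
    have e5: "y 6 = 0" using e[of 5] e9 e8 e7 e6 by (simp add: key ebas_def)
    have e4: "y 7 = 0" using e[of 4] e9 e8 e7 e6 e5 by (simp add: key ebas_def)
    have e3: "y 8 = 0" using e[of 3] e9 e8 e7 e6 e5 e4 by (simp add: key ebas_def)
    have e2: "y 9 = 0" using e[of 2] e9 e8 e7 e6 e5 e4 e3 by (simp add: key ebas_def)
    have "y = (\<lambda>k. y 11 * ebas 11 k)"
    proof
      fix k
      show "y k = y 11 * ebas 11 k"
      proof (cases "k \<in> {1..11}")
        case True
        then have "k \<in> {1,2,3,4,5,6,7,8,9,10,11}" by (auto; arith)
        then show ?thesis using e1 e2 e3 e4 e5 e6 e7 e8 e9 e10 by (auto simp: ebas_def)
      next
        case False
        then show ?thesis using g by (auto simp: gvec_def ebas_def)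
      qed
    qed
    then show "y \<in> zcen" unfolding zcen_def by blast
  qed
next
  show "zcen \<subseteq> stab \<alpha> \<beta> ell"
  proof
    fix y assume "y \<in> zcen"
    then obtain c where c: "y = (\<lambda>k. c * ebas 11 k)" unfolding zcen_def by blast
    have "y \<in> gvec" using c by (auto simp: gvec_def ebas_def)
    moreover have "\<forall>x \<in> gvec. ell (gbr \<alpha> \<beta> x y) = 0"
      using c by (simp add: ell_def key ebas_def)
    ultimately show "y \<in> stab \<alpha> \<beta> ell" by (simp add: stab_def)
  qed
qed

end
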